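(* Let $S$ be a finite set of points in the plane and let $\mathcal{F}$ be the family of halfplanes. Then the Delaunay-edges of $S$ with respect to $\mathcal{F}$ can be $2$-colored such that every halfplane that contains at least three Delaunay-edges contains two Delaunay-edges of different colors. Moreover, this statement is false if "three" is replaced by "two": there is a finite point set $S$ in the plane such that for every $2$-coloring of its Delaunay-edges with respect to halfplanes, some halfplane contains at least two Delaunay-edges, all of the same color.
   Context: For a finite point set $S$ and a family of regions $\mathcal{F}$, the Delaunay-edges of $S$ with respect to $\mathcal{F}$ are the $2$-element subsets $\{p,q\}\subseteq S$ for which there is $F\in\mathcal{F}$ with $S\cap F=\{p,q\}$. A region contains a Delaunay-edge if it contains both of its endpoints. *)

theory Defs
  imports Main "HOL.Real"
begin

type_synonym point = "real \<times> real"

definition halfplane :: "point set \<Rightarrow> bool" where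
  "halfplane H \<longleftrightarrow> (\<exists>a b c. (a, b) \<noteq> (0::real, 0::real) \<and>
       H = {p. a * fst p + b * snd p \<le> c})"

definition delaunay_edges :: "'a set set \<Rightarrow> 'a set \<Rightarrow> 'a set set" where
  "delaunay_edges F S = {e. \<exists>p q. p \<noteq> q \<and> e = {p, q} \<and> e \<subseteq> S \<and> (\<exists>R\<in>F. S \<inter> R = e)}"

definition halfplanes :: "point set set" where
  "halfplanes = {H. halfplane H}"

end

theory Submission
  imports Defs Complex_Main
begin


lemma interp_id:
  fixes A B a b g :: real
  shows "sin (b - a) * (A * cos g + B * sin g) = sin (b - g) * (A * cos a + B * sin a) + sin (g - a) * (A * cos b + B * sin b)"
  by (simp add: sin_diff algebra_simps)

lemma interp:
  fixes A B a b g :: real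
  assumes "a \<le> g" "g \<le> b" "b - a < pi"
    and "A * cos a + B * sin a > 0" "A * cos b + B * sin b > 0"
  shows "A * cos g + B * sin g > 0"
proof (cases "g = a")
  case True thus ?thesis using assms by simp
next
  case False
  hence ga: "0 < g - a" using assms by simp
  have s1: "sin (b - a) > 0" using ga assms by (intro sin_gt_zero) auto
  have s2: "sin (g - a) > 0" using ga assms by (intro sin_gt_zero) auto
  have s3: "sin (b - g) \<ge> 0" using assms by (intro sin_ge_zero) auto
  have "sin (b - g) * (A * cos a + B * sin a) + sin (g - a) * (A * cos b + B * sin b) > 0"
    using s2 s3 assms by (simp add: add_nonneg_pos)
  hence "sin (b - a) * (A * cos g + B * sin g) > 0" using interp_id by metis
  thus ?thesis using s1 by (simp add: zero_less_mult_iff)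
qed

lemma arith_contra:
  fixes P t k1 k2 k3 o1 o2 k1' k2' k3' :: real
  assumes "P > 0" "0 \<le> t" "t < 2*P" "0 \<le> k1" "k1 < o1" "o1 < k2" "k2 < o2" "o2 < k3" "k3 < 2*P"
    "k1' = k1 - 2*P \<or> k1' = k1 \<or> k1' = k1 + 2*P" "\<bar>k1' - t\<bar> < P"
    "k2' = k2 - 2*P \<or> k2' = k2 \<or> k2' = k2 + 2*P" "\<bar>k2' - t\<bar> < P"
    "k3' = k3 - 2*P \<or> k3' = k3 \<or> k3' = k3 + 2*P" "\<bar>k3' - t\<bar> < P"
    "\<And>k' x j. k' \<in> {k1',k2',k3'} \<Longrightarrow> x \<in> {o1,o2} \<Longrightarrow> j \<in> {-2*P,0,2*P} \<Longrightarrow>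
        \<not> (min t k' \<le> x + j \<and> x + j \<le> max t k')"
  shows False
proof -
  have b: "\<And>k' x j. k' \<in> {k1',k2',k3'} \<Longrightarrow> x \<in> {o1,o2} \<Longrightarrow> j \<in> {-2*P,0,2*P} \<Longrightarrow>
        (x + j < t \<and> x + j < k') \<or> (x + j > t \<and> x + j > k')"
  proof -
    fix k' x j assume h: "k' \<in> {k1',k2',k3'}" "x \<in> {o1,o2}" "j \<in> {-2*P,0,2*P}"
    have "\<not> (min t k' \<le> x + j \<and> x + j \<le> max t k')" using assms(16)[OF h] .
    thus "(x + j < t \<and> x + j < k') \<or> (x + j > t \<and> x + j > k')"
      by (simp add: min_def max_def split: if_splits) linarith+
  qed
  have t1: "o1 < t \<and> t < o2"
  proof -
    have c1: "(o1 < t \<and> o1 < k2') \<or> (o1 > t \<and> o1 > k2')" using b[of k2' o1 0] by simp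
    have c2: "(o2 < t \<and> o2 < k2') \<or> (o2 > t \<and> o2 > k2')" using b[of k2' o2 0] by simp
    have c3: "(o1 + 2*P < t \<and> o1 + 2*P < k2') \<or> (o1 + 2*P > t \<and> o1 + 2*P > k2')" using b[of k2' o1 "2*P"] by simp
    have c4: "(o2 - 2*P < t \<and> o2 - 2*P < k2') \<or> (o2 - 2*P > t \<and> o2 - 2*P > k2')" using b[of k2' o2 "-2*P"] by simp
    from assms(12) show ?thesis
    proof (elim disjE)
      assume "k2' = k2 - 2*P" thus ?thesis using c1 c2 c3 c4 assms(1-9,13) by (smt (verit))
    next
      assume "k2' = k2" thus ?thesis using c1 c2 c3 c4 assms(1-9,13) by (smt (verit))
    next
      assume "k2' = k2 + 2*P" thus ?thesis using c1 c2 c3 c4 assms(1-9,13) by (smt (verit))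
    qed
  qed
  show False
  proof (cases "t \<le> k2")
    case True
    have c1: "(o1 < t \<and> o1 < k3') \<or> (o1 > t \<and> o1 > k3')" using b[of k3' o1 0] by simp
    have c2: "(o2 < t \<and> o2 < k3') \<or> (o2 > t \<and> o2 > k3')" using b[of k3' o2 0] by simp
    from assms(14) show False
    proof (elim disjE)
      assume "k3' = k3 - 2*P" thus False using c1 c2 t1 True assms(1-9,15) by (smt (verit))
    next
      assume "k3' = k3" thus False using c1 c2 t1 True assms(1-9,15) by (smt (verit))
    next
      assume "k3' = k3 + 2*P" thus False using c1 c2 t1 True assms(1-9,15) by (smt (verit))
    qed
  next
    case False
    have c1: "(o1 < t \<and> o1 < k1') \<or> (o1 > t \<and> o1 > k1')" using b[of k1' o1 0] by simp
    have c2: "(o2 < t \<and> o2 < k1') \<or> (o2 > t \<and> o2 > k1')" using b[of k1' o2 0] by simp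
    from assms(10) show False
    proof (elim disjE)
      assume "k1' = k1 - 2*P" thus False using c1 c2 t1 False assms(1-9,11) by (smt (verit))
    next
      assume "k1' = k1" thus False using c1 c2 t1 False assms(1-9,11) by (smt (verit))
    next
      assume "k1' = k1 + 2*P" thus False using c1 c2 t1 False assms(1-9,11) by (smt (verit))
    qed
  qed
qed


definition ip :: "real \<Rightarrow> point \<Rightarrow> real" where
  "ip t p = cos t * fst p + sin t * snd p"

definition good :: "point set \<Rightarrow> real \<Rightarrow> point set \<Rightarrow> bool" where
  "good S t e \<longleftrightarrow> (\<exists>p q. p \<noteq> q \<and> e = {p, q}) \<and> e \<subseteq> S \<and> (\<forall>p\<in>e. \<forall>r\<in>S-e. ip t r < ip t p)"

lemma ip_shift: "ip (t + 2*pi) p = ip t p" "ip (t - 2*pi) p = ip t p"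
  by (simp_all add: ip_def cos_diff sin_diff)

lemma good_shift: "good S (t + 2*pi) e = good S t e" "good S (t - 2*pi) e = good S t e"
  by (simp_all add: good_def ip_shift)

lemma good_unique:
  assumes "good S t e" "good S t f" shows "e = f"
proof (rule ccontr)
  assume ne: "e \<noteq> f"
  obtain p q where e: "p \<noteq> q" "e = {p,q}" using assms(1) good_def by auto
  obtain p' q' where f: "p' \<noteq> q'" "f = {p',q'}" using assms(2) good_def by auto
  have "\<exists>x\<in>e. x \<notin> f" using e f ne by auto
  then obtain x where x: "x \<in> e" "x \<notin> f" by blast
  have "\<exists>y\<in>f. y \<notin> e" using e f ne x by auto
  then obtain y where y: "y \<in> f" "y \<notin> e" by blast
  have "x \<in> S" "y \<in> S" using x y assms unfolding good_def by auto
  hence "ip t y < ip t x" "ip t x < ip t y" using assms x y unfolding good_def by auto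
  thus False by simp
qed

lemma good_edge:
  assumes "good S t e" shows "e \<in> delaunay_edges halfplanes S"
proof -
  obtain p q where e: "p \<noteq> q" "e = {p,q}" using assms good_def by auto
  define m where "m = min (ip t p) (ip t q)"
  define H where "H = {x::point. (- cos t) * fst x + (- sin t) * snd x \<le> - m}"
  have "(- cos t, - sin t) \<noteq> (0::real, 0::real)"
  proof
    assume "(- cos t, - sin t) = (0::real, 0::real)"
    hence "cos t = 0" "sin t = 0" by auto
    thus False using sin_cos_squared_add[of t] by simp
  qed
  hence hp: "H \<in> halfplanes" unfolding halfplanes_def halfplane_def H_def by blast
  have "S \<inter> H = e"
  proof
    show "S \<inter> H \<subseteq> e"
    proof
      fix x assume x: "x \<in> S \<inter> H"
      show "x \<in> e"
      proof (rule ccontr)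
        assume "x \<notin> e"
        hence "ip t x < ip t p" "ip t x < ip t q" using assms x e unfolding good_def by auto
        moreover have "ip t x \<ge> m" using x unfolding H_def ip_def by auto
        ultimately show False unfolding m_def by linarith
      qed
    qed
    show "e \<subseteq> S \<inter> H" using assms e unfolding good_def H_def m_def ip_def by auto
  qed
  thus ?thesis using e hp assms unfolding delaunay_edges_def good_def by blast
qed

lemma halfplane_dir:
  assumes "halfplane H"
  shows "\<exists>t. 0 \<le> t \<and> t < 2*pi \<and> (\<forall>p\<in>H. \<forall>r. r \<notin> H \<longrightarrow> ip t r < ip t p)"
proof -
  obtain a b c where abc: "(a, b) \<noteq> (0::real, 0::real)" "H = {p. a * fst p + b * snd p \<le> c}"
    using assms halfplane_def by blast
  define n where "n = sqrt (a^2 + b^2)"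
  have pos: "a^2 + b^2 > 0" using abc(1) by (auto simp: sum_power2_gt_zero_iff)
  hence n: "n > 0" "n^2 = a^2 + b^2" unfolding n_def by auto
  have "(-a/n)^2 + (-b/n)^2 = (a^2+b^2)/n^2" by (simp add: power_divide add_divide_distrib)
  also have "\<dots> = 1" using n pos by (metis less_irrefl divide_self)
  finally have "(-a/n)^2 + (-b/n)^2 = 1" .
  then obtain t where t: "0 \<le> t" "t < 2*pi" "-a/n = cos t" "-b/n = sin t"
    using sincos_total_2pi by blast
  have ipt: "ip t x = - (a * fst x + b * snd x) / n" for x
    unfolding ip_def t(3)[symmetric] t(4)[symmetric] using n(1) by (simp add: field_simps)
  have "\<forall>p\<in>H. \<forall>r. r \<notin> H \<longrightarrow> ip t r < ip t p"
    using n(1) unfolding ipt abc(2) by (auto simp: divide_strict_right_mono)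
  thus ?thesis using t by blast
qed

lemma edge_good:
  assumes "e \<in> delaunay_edges halfplanes S"
  shows "\<exists>t. 0 \<le> t \<and> t < 2*pi \<and> good S t e"
proof -
  obtain p q R where e: "p \<noteq> q" "e = {p,q}" "e \<subseteq> S" "R \<in> halfplanes" "S \<inter> R = e"
    using assms unfolding delaunay_edges_def by blast
  obtain t where t: "0 \<le> t" "t < 2*pi" "\<forall>p\<in>R. \<forall>r. r \<notin> R \<longrightarrow> ip t r < ip t p"
    using halfplane_dir e(4) halfplanes_def by blast
  have "good S t e" unfolding good_def using e t(3) by blast
  thus ?thesis using t by blast
qed



definition key :: "point set \<Rightarrow> point set \<Rightarrow> real" where
  "key S e = (SOME t. 0 \<le> t \<and> t < 2*pi \<and> good S t e)"

lemma key_prop: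
  assumes "e \<in> delaunay_edges halfplanes S"
  shows "0 \<le> key S e \<and> key S e < 2*pi \<and> good S (key S e) e"
  unfolding key_def using someI_ex[OF edge_good[OF assms]] .

lemma key_inj:
  assumes "e \<in> delaunay_edges halfplanes S" "f \<in> delaunay_edges halfplanes S" "key S e = key S f"
  shows "e = f"
  using key_prop[OF assms(1)] key_prop[OF assms(2)] assms(3) good_unique by metis

lemma ip_diff: "ip s p - ip s x = (fst p - fst x) * cos s + (snd p - snd x) * sin s"
  unfolding ip_def by (simp add: algebra_simps)

lemma factA:
  assumes g: "good S k g" "g \<subseteq> H" and t: "\<forall>p\<in>H. \<forall>r. r \<notin> H \<longrightarrow> ip t r < ip t p"
    and kt: "\<bar>k - t\<bar> < pi" and gam: "min t k \<le> \<gamma>" "\<gamma> \<le> max t k" and h: "good S \<gamma> h"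
  shows "h \<subseteq> H"
proof (rule ccontr)
  assume "\<not> h \<subseteq> H"
  then obtain x where x: "x \<in> h" "x \<notin> H" by blast
  have xS: "x \<in> S" using h x unfolding good_def by auto
  have beat: "ip \<gamma> x < ip \<gamma> p" if p: "p \<in> g" for p
  proof -
    have pH: "p \<in> H" using p g by auto
    have xg: "x \<notin> g" using x g by auto
    have 1: "ip t x < ip t p" using t pH x by blast
    have 2: "ip k x < ip k p" using g(1) p xS xg unfolding good_def by auto
    have "(fst p - fst x) * cos (min t k) + (snd p - snd x) * sin (min t k) > 0"
      using 1 2 ip_diff[of "min t k" p x] ip_diff[of t p x] ip_diff[of k p x] by (simp add: min_def)
    moreover have "(fst p - fst x) * cos (max t k) + (snd p - snd x) * sin (max t k) > 0"
      using 1 2 ip_diff[of "max t k" p x] ip_diff[of t p x] ip_diff[of k p x] by (simp add: max_def)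
    moreover have "max t k - min t k < pi" using kt by (simp add: min_def max_def abs_if split: if_splits)
    ultimately have "(fst p - fst x) * cos \<gamma> + (snd p - snd x) * sin \<gamma> > 0"
      using interp[OF gam] by blast
    thus ?thesis using ip_diff[of \<gamma> p x] by simp
  qed
  obtain p1 p2 where g12: "p1 \<noteq> p2" "g = {p1, p2}" using g(1) unfolding good_def by auto
  have gS: "g \<subseteq> S" using g(1) unfolding good_def by auto
  have inh: "p \<in> h" if "p \<in> g" for p
  proof (rule ccontr)
    assume "p \<notin> h"
    hence "ip \<gamma> p < ip \<gamma> x" using h x that gS unfolding good_def by auto
    thus False using beat[OF that] by simp
  qed
  obtain q1 q2 where h12: "h = {q1, q2}" using h unfolding good_def by auto
  have "p1 \<in> H" "p2 \<in> H" using g g12 by auto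
  hence "x \<noteq> p1" "x \<noteq> p2" using x by auto
  moreover have "p1 \<in> h" "p2 \<in> h" using inh g12 by auto
  ultimately show False using x(1) g12(1) h12 by auto
qed

lemma shift_exists:
  assumes k: "0 \<le> k" "k < 2*pi" and t: "0 \<le> t" "t < 2*pi" and g: "good S k g" "g \<subseteq> H"
    and r0: "r0 \<in> S" "r0 \<notin> H" and tH: "\<forall>p\<in>H. \<forall>r. r \<notin> H \<longrightarrow> ip t r < ip t p"
  shows "\<exists>k'. (k' = k - 2*pi \<or> k' = k \<or> k' = k + 2*pi) \<and> \<bar>k' - t\<bar> < pi \<and> good S k' g"
proof -
  obtain k' where k': "(k' = k - 2*pi \<or> k' = k \<or> k' = k + 2*pi)" "\<bar>k' - t\<bar> \<le> pi"
  proof (cases "k - t > pi")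
    case True thus ?thesis using that[of "k - 2*pi"] k t by auto
  next
    case False
    show ?thesis
    proof (cases "k - t < - pi")
      case True thus ?thesis using that[of "k + 2*pi"] k t by auto
    next
      case False2: False
      thus ?thesis using that[of k] False by auto
    qed
  qed
  have gk': "good S k' g" using k'(1) g(1) good_shift by auto
  obtain p where p: "p \<in> g" using g(1) unfolding good_def by auto
  have pH: "p \<in> H" using p g by auto
  have r0g: "r0 \<notin> g" using r0 g by auto
  have 1: "ip t r0 < ip t p" using tH pH r0 by blast
  have 2: "ip k' r0 < ip k' p" using gk' p r0 r0g unfolding good_def by auto
  have "\<bar>k' - t\<bar> \<noteq> pi"
  proof
    assume "\<bar>k' - t\<bar> = pi"
    hence "k' = t + pi \<or> k' = t - pi" by (auto simp: abs_if split: if_splits)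
    hence "cos k' = - cos t \<and> sin k' = - sin t" by (auto simp: cos_diff sin_diff)
    hence "ip k' y = - ip t y" for y unfolding ip_def by simp
    thus False using 1 2 by (metis neg_less_iff_less less_asym)
  qed
  thus ?thesis using k' gk' by auto
qed



lemma finite_E: "finite S \<Longrightarrow> finite (delaunay_edges halfplanes S)"
  by (rule finite_subset[of _ "Pow S"]) (auto simp: delaunay_edges_def)

lemma main:
  assumes S: "finite S" and H: "halfplane H"
    and c3: "3 \<le> card {e \<in> delaunay_edges halfplanes S. e \<subseteq> H}"
  shows "\<exists>e\<in>delaunay_edges halfplanes S. \<exists>f\<in>delaunay_edges halfplanes S.
           e \<subseteq> H \<and> f \<subseteq> H \<and> key S e < key S f \<and>
           (\<forall>h\<in>delaunay_edges halfplanes S. \<not> (key S e < key S h \<and> key S h < key S f))"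
proof -
  define E where "E = delaunay_edges halfplanes S"
  define I where "I = {e \<in> E. e \<subseteq> H}"
  have fE: "finite E" using finite_E[OF S] E_def by simp
  have fI: "finite I" using fE I_def by simp
  have injI: "inj_on (key S) I" using key_inj unfolding inj_on_def I_def E_def by blast
  define K where "K = key S ` I"
  have fK: "finite K" using fI K_def by simp
  have cK: "card K \<ge> 3" using card_image[OF injI] c3 unfolding K_def I_def E_def by simp
  define k1 where "k1 = Min K"
  define k2 where "k2 = Min (K - {k1})"
  define k3 where "k3 = Min (K - {k1} - {k2})"
  have ne1: "K \<noteq> {}" using cK by auto
  have k1K: "k1 \<in> K" using Min_in[OF fK ne1] k1_def by simp
  have c1: "card (K - {k1}) \<ge> 2" using cK k1K fK by (simp add: card_Diff_singleton)
  hence ne2: "K - {k1} \<noteq> {}" by (metis card.empty not_numeral_le_zero)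
  have k2K: "k2 \<in> K - {k1}" using Min_in[OF _ ne2] fK k2_def by simp
  have c2: "card (K - {k1} - {k2}) \<ge> 1" using c1 k2K fK by (simp add: card_Diff_singleton)
  hence ne3: "K - {k1} - {k2} \<noteq> {}" by (metis card.empty not_one_le_zero)
  have k3K: "k3 \<in> K - {k1} - {k2}" using Min_in[OF _ ne3] fK k3_def by simp
  have m1: "\<And>k. k \<in> K \<Longrightarrow> k1 \<le> k" using fK k1_def by simp
  have m2: "\<And>k. k \<in> K - {k1} \<Longrightarrow> k2 \<le> k" using fK k2_def by simp
  have m3: "\<And>k. k \<in> K - {k1} - {k2} \<Longrightarrow> k3 \<le> k" using fK k3_def by simp
  have k12: "k1 < k2" using m1 k2K by force
  have k23: "k2 < k3" using m2 k3K by force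
  obtain g1 where g1: "g1 \<in> I" "key S g1 = k1" using k1K K_def by auto
  obtain g2 where g2: "g2 \<in> I" "key S g2 = k2" using k2K K_def by auto
  obtain g3 where g3: "g3 \<in> I" "key S g3 = k3" using k3K K_def by auto
  have gap12: "\<not> (k1 < key S g \<and> key S g < k2)" if "g \<in> I" for g
  proof
    assume a: "k1 < key S g \<and> key S g < k2"
    have "key S g \<in> K" using that K_def by auto
    hence "key S g \<in> K - {k1}" using a by auto
    thus False using m2 a by force
  qed
  have gap23: "\<not> (k2 < key S g \<and> key S g < k3)" if "g \<in> I" for g
  proof
    assume a: "k2 < key S g \<and> key S g < k3"
    have "key S g \<in> K" using that K_def by auto
    hence "key S g \<in> K - {k1} - {k2}" using a k12 by auto
    thus False using m3 a by force
  qed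
  show ?thesis
  proof (cases "\<exists>h\<in>E. k1 < key S h \<and> key S h < k2")
    case False
    thus ?thesis using g1 g2 k12 unfolding I_def E_def by auto
  next
    case True
    then obtain h1 where h1: "h1 \<in> E" "k1 < key S h1" "key S h1 < k2" by blast
    show ?thesis
    proof (cases "\<exists>h\<in>E. k2 < key S h \<and> key S h < k3")
      case False
      thus ?thesis using g2 g3 k23 unfolding I_def E_def by auto
    next
      case True
      then obtain h2 where h2: "h2 \<in> E" "k2 < key S h2" "key S h2 < k3" by blast
      have h1H: "\<not> h1 \<subseteq> H" using gap12[of h1] h1 I_def by auto
      have h2H: "\<not> h2 \<subseteq> H" using gap23[of h2] h2 I_def by auto
      obtain r0 where r0: "r0 \<in> h1" "r0 \<notin> H" using h1H by blast
      have r0S: "r0 \<in> S" using r0 h1 unfolding E_def delaunay_edges_def by auto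
      obtain t where t: "0 \<le> t" "t < 2*pi" "\<forall>p\<in>H. \<forall>r. r \<notin> H \<longrightarrow> ip t r < ip t p"
        using halfplane_dir[OF H] by blast
      have kp: "\<And>g. g \<in> E \<Longrightarrow> 0 \<le> key S g \<and> key S g < 2*pi \<and> good S (key S g) g"
        using key_prop E_def by blast
      have sh: "\<exists>k'. (k' = key S g - 2*pi \<or> k' = key S g \<or> k' = key S g + 2*pi) \<and> \<bar>k' - t\<bar> < pi \<and> good S k' g"
        if "g \<in> I" for g
      proof -
        have gE: "g \<in> E" "g \<subseteq> H" using that I_def by auto
        show ?thesis using shift_exists[of "key S g" t S g H r0] kp[OF gE(1)] gE(2) t(1,2,3) r0(2) r0S by blast
      qed
      obtain k1' where k1': "k1' = k1 - 2*pi \<or> k1' = k1 \<or> k1' = k1 + 2*pi" "\<bar>k1' - t\<bar> < pi" "good S k1' g1"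
        using sh[OF g1(1)] g1(2) by blast
      obtain k2' where k2': "k2' = k2 - 2*pi \<or> k2' = k2 \<or> k2' = k2 + 2*pi" "\<bar>k2' - t\<bar> < pi" "good S k2' g2"
        using sh[OF g2(1)] g2(2) by blast
      obtain k3' where k3': "k3' = k3 - 2*pi \<or> k3' = k3 \<or> k3' = k3 + 2*pi" "\<bar>k3' - t\<bar> < pi" "good S k3' g3"
        using sh[OF g3(1)] g3(2) by blast
      have gH: "g1 \<subseteq> H" "g2 \<subseteq> H" "g3 \<subseteq> H" using g1 g2 g3 I_def by auto
      have goodsh: "good S (key S h + j) h" if "h \<in> E" "j \<in> {-2*pi, 0, 2*pi}" for h j
      proof -
        have "good S (key S h) h" using kp[OF that(1)] by blast
        moreover have "j = -2*pi \<or> j = 0 \<or> j = 2*pi" using that(2) by simp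
        ultimately show ?thesis
        proof (elim disjE)
          assume "j = -2*pi"
          hence "key S h + j = key S h - 2*pi" by simp
          thus ?thesis using good_shift(2)[of S "key S h" h] \<open>good S (key S h) h\<close> by simp
        next
          assume "j = 2*pi"
          thus ?thesis using good_shift(1)[of S "key S h" h] \<open>good S (key S h) h\<close> by simp
        qed simp
      qed
      have blk: "\<not> (min t k' \<le> x + j \<and> x + j \<le> max t k')"
        if kk: "k' \<in> {k1',k2',k3'}" "x \<in> {key S h1, key S h2}" "j \<in> {-2*pi,0,2*pi}" for k' x j
      proof
        assume b: "min t k' \<le> x + j \<and> x + j \<le> max t k'"
        obtain h where h: "h \<in> {h1, h2}" "x = key S h" using kk(2) by auto
        have hE: "h \<in> E" using h h1 h2 by auto
        have gd: "good S (x + j) h" using goodsh[OF hE kk(3)] h by simp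
        have "k' = k1' \<or> k' = k2' \<or> k' = k3'" using kk(1) by simp
        hence "h \<subseteq> H"
        proof (elim disjE)
          assume "k' = k1'" thus ?thesis using factA[OF k1'(3) gH(1) t(3) k1'(2), of "x+j" h] b gd by simp
        next
          assume "k' = k2'" thus ?thesis using factA[OF k2'(3) gH(2) t(3) k2'(2), of "x+j" h] b gd by simp
        next
          assume "k' = k3'" thus ?thesis using factA[OF k3'(3) gH(3) t(3) k3'(2), of "x+j" h] b gd by simp
        qed
        thus False using h h1H h2H by auto
      qed
      have k1p: "0 \<le> k1" using kp[of g1] g1 I_def by auto
      have k3p: "k3 < 2*pi" using kp[of g3] g3 I_def by auto
      have False
        by (rule arith_contra[OF pi_gt_zero t(1) t(2) k1p h1(2) h1(3) h2(2) h2(3) k3p k1'(1) k1'(2) k2'(1) k2'(2)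
          k3'(1) k3'(2) blk])
      thus ?thesis ..
    qed
  qed
qed
definition colr :: "point set \<Rightarrow> point set \<Rightarrow> bool" where
  "colr S e = even (card {f \<in> delaunay_edges halfplanes S. key S f < key S e})"

lemma col_diff:
  assumes S: "finite S" and e: "e \<in> delaunay_edges halfplanes S" and f: "f \<in> delaunay_edges halfplanes S"
    and ef: "key S e < key S f"
    and gap: "\<forall>h\<in>delaunay_edges halfplanes S. \<not> (key S e < key S h \<and> key S h < key S f)"
  shows "colr S e \<noteq> colr S f"
proof -
  define E where "E = delaunay_edges halfplanes S"
  have fE: "finite E" using finite_E[OF S] E_def by simp
  have eq: "{g \<in> E. key S g < key S f} = insert e {g \<in> E. key S g < key S e}"
  proof (rule set_eqI, rule iffI)
    fix g assume g: "g \<in> {g \<in> E. key S g < key S f}"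
    hence gE: "g \<in> E" and gf: "key S g < key S f" by auto
    consider "key S g < key S e" | "key S g = key S e" | "key S e < key S g" by linarith
    thus "g \<in> insert e {g \<in> E. key S g < key S e}"
    proof cases
      case 1 thus ?thesis using gE by simp
    next
      case 2 thus ?thesis using key_inj[of g S e] gE e E_def by simp
    next
      case 3 thus ?thesis using gap gE gf E_def by blast
    qed
  next
    fix g assume "g \<in> insert e {g \<in> E. key S g < key S e}"
    thus "g \<in> {g \<in> E. key S g < key S f}" using e ef E_def by auto
  qed
  have "card {g \<in> E. key S g < key S f} = Suc (card {g \<in> E. key S g < key S e})"
    unfolding eq using fE by (subst card_insert_disjoint) auto
  thus ?thesis unfolding colr_def E_def by simp
qed

lemma part1:
  "\<forall>S :: point set. finite S \<longrightarrow>
           (\<exists>col :: point set \<Rightarrow> bool.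
              \<forall>H. halfplane H \<longrightarrow>
                 card {e \<in> delaunay_edges halfplanes S. e \<subseteq> H} \<ge> 3 \<longrightarrow>
                 (\<exists>e1 \<in> delaunay_edges halfplanes S. \<exists>e2 \<in> delaunay_edges halfplanes S.
                    e1 \<subseteq> H \<and> e2 \<subseteq> H \<and> col e1 \<noteq> col e2))"
proof (intro allI impI)
  fix S :: "point set" assume S: "finite S"
  show "\<exists>col :: point set \<Rightarrow> bool.
              \<forall>H. halfplane H \<longrightarrow>
                 card {e \<in> delaunay_edges halfplanes S. e \<subseteq> H} \<ge> 3 \<longrightarrow>
                 (\<exists>e1 \<in> delaunay_edges halfplanes S. \<exists>e2 \<in> delaunay_edges halfplanes S.
                    e1 \<subseteq> H \<and> e2 \<subseteq> H \<and> col e1 \<noteq> col e2)"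
  proof (intro exI[of _ "colr S"] allI impI)
    fix H assume H: "halfplane H" and c: "card {e \<in> delaunay_edges halfplanes S. e \<subseteq> H} \<ge> 3"
    from main[OF S H c] obtain e f where
      ef: "e \<in> delaunay_edges halfplanes S" "f \<in> delaunay_edges halfplanes S"
      "e \<subseteq> H" "f \<subseteq> H" "key S e < key S f"
      "\<forall>h\<in>delaunay_edges halfplanes S. \<not> (key S e < key S h \<and> key S h < key S f)" by blast
    have "colr S e \<noteq> colr S f" by (rule col_diff[OF S ef(1,2,5,6)])
    thus "\<exists>e1 \<in> delaunay_edges halfplanes S. \<exists>e2 \<in> delaunay_edges halfplanes S.
                    e1 \<subseteq> H \<and> e2 \<subseteq> H \<and> colr S e1 \<noteq> colr S e2"
      using ef(1-4) by blast
  qed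
qed



lemma pair_edge:
  assumes "(a, b) \<noteq> (0::real, 0::real)" "S \<inter> {p. a * fst p + b * snd p \<le> c} = {p, q}" "p \<noteq> q"
  shows "{p, q} \<in> delaunay_edges halfplanes S"
  using assms unfolding delaunay_edges_def halfplanes_def halfplane_def by blast

lemma nonedge:
  assumes L: "\<forall>a b c::real. a*fst A + b*snd A \<le> c \<longrightarrow> a*fst C + b*snd C \<le> c \<longrightarrow>
                 a*fst B + b*snd B \<le> c \<or> a*fst D + b*snd D \<le> c"
    and "B \<in> S" "D \<in> S" "B \<notin> {A, C}" "D \<notin> {A, C}"
  shows "{A, C} \<notin> delaunay_edges halfplanes S"
proof
  assume "{A, C} \<in> delaunay_edges halfplanes S"
  then obtain R where R: "R \<in> halfplanes" "S \<inter> R = {A, C}" unfolding delaunay_edges_def by blast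
  obtain a b c where abc: "R = {p. a * fst p + b * snd p \<le> c}"
    using R(1) unfolding halfplanes_def halfplane_def by blast
  have "A \<in> R" "C \<in> R" using R(2) by auto
  moreover have "B \<notin> R" "D \<notin> R" using R(2) assms(2-5) by auto
  ultimately show False using L abc by auto
qed

lemma part2_case:
  assumes H: "halfplane H" and SH: "S \<inter> H = {A, B, C}" and ne: "A \<noteq> C" "A \<noteq> B" "B \<noteq> C"
    and AB: "{A, B} \<in> delaunay_edges halfplanes S" and BC: "{B, C} \<in> delaunay_edges halfplanes S"
    and AC: "{A, C} \<notin> delaunay_edges halfplanes S"
    and col: "col {A, B} = col {B, C}"
  shows "\<exists>H. halfplane H \<and>
                 card {e \<in> delaunay_edges halfplanes S. e \<subseteq> H} \<ge> 2 \<and>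
                 (\<forall>e1 \<in> delaunay_edges halfplanes S. \<forall>e2 \<in> delaunay_edges halfplanes S.
                    e1 \<subseteq> H \<longrightarrow> e2 \<subseteq> H \<longrightarrow> col e1 = col e2)"
proof -
  have sub: "e \<in> {{A, B}, {B, C}}" if ee: "e \<in> delaunay_edges halfplanes S" "e \<subseteq> H" for e
  proof -
    obtain p q where pq: "p \<noteq> q" "e = {p, q}" "e \<subseteq> S" using ee(1) unfolding delaunay_edges_def by blast
    have "p \<in> {A, B, C}" "q \<in> {A, B, C}" using pq ee(2) SH by auto
    hence "e = {A, B} \<or> e = {B, C} \<or> e = {A, C}" using pq(1,2) by auto
    thus ?thesis using ee(1) AC by auto
  qed
  have eq: "{e \<in> delaunay_edges halfplanes S. e \<subseteq> H} = {{A, B}, {B, C}}"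
  proof
    show "{e \<in> delaunay_edges halfplanes S. e \<subseteq> H} \<subseteq> {{A, B}, {B, C}}" using sub by blast
    show "{{A, B}, {B, C}} \<subseteq> {e \<in> delaunay_edges halfplanes S. e \<subseteq> H}" using AB BC SH by auto
  qed
  have "{A, B} \<noteq> {B, C}" using ne by (auto simp: doubleton_eq_iff)
  hence "card {e \<in> delaunay_edges halfplanes S. e \<subseteq> H} = 2" unfolding eq by simp
  moreover have "\<forall>e1 \<in> delaunay_edges halfplanes S. \<forall>e2 \<in> delaunay_edges halfplanes S.
                    e1 \<subseteq> H \<longrightarrow> e2 \<subseteq> H \<longrightarrow> col e1 = col e2"
  proof (intro ballI impI)
    fix e1 e2 assume a: "e1 \<in> delaunay_edges halfplanes S" "e2 \<in> delaunay_edges halfplanes S" "e1 \<subseteq> H" "e2 \<subseteq> H"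
    have "e1 = {A, B} \<or> e1 = {B, C}" using sub[OF a(1) a(3)] by simp
    moreover have "e2 = {A, B} \<or> e2 = {B, C}" using sub[OF a(2) a(4)] by simp
    ultimately show "col e1 = col e2" using col by auto
  qed
  ultimately show ?thesis using H by auto
qed

definition P5 :: "point set" where
  "P5 = {(0,0), (2,0), (3,2), (1,3), (-1,2)}"

lemma hp: "(a, b) \<noteq> (0::real, 0::real) \<Longrightarrow> halfplane {p. a * fst p + b * snd p \<le> c}"
  unfolding halfplane_def by blast

lemma e01: "{(0,0), (2,0)} \<in> delaunay_edges halfplanes P5"
  by (rule pair_edge[of 0 1 _ 1]) (auto simp: P5_def)
lemma e12: "{(2,0), (3,2)} \<in> delaunay_edges halfplanes P5"
  by (rule pair_edge[of "-2" 1 _ "-3"]) (auto simp: P5_def)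
lemma e23: "{(3,2), (1,3)} \<in> delaunay_edges halfplanes P5"
  by (rule pair_edge[of "-1" "-2" _ "-5"]) (auto simp: P5_def)
lemma e34: "{(1,3), (-1,2)} \<in> delaunay_edges halfplanes P5"
  by (rule pair_edge[of 1 "-2" _ "-3"]) (auto simp: P5_def)
lemma e40: "{(-1,2), (0,0)} \<in> delaunay_edges halfplanes P5"
  by (rule pair_edge[of 2 1 _ 1]) (auto simp: P5_def)

lemma d02: "{(0,0), (3,2)} \<notin> delaunay_edges halfplanes P5"
  by (rule nonedge[where B="(2,0)" and D="(1,3)"]) (auto simp: P5_def)
lemma d13: "{(2,0), (1,3)} \<notin> delaunay_edges halfplanes P5"
  by (rule nonedge[where B="(3,2)" and D="(-1,2)"]) (auto simp: P5_def)
lemma d24: "{(3,2), (-1,2)} \<notin> delaunay_edges halfplanes P5"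
  by (rule nonedge[where B="(1,3)" and D="(0,0)"]) (auto simp: P5_def)
lemma d30: "{(1,3), (0,0)} \<notin> delaunay_edges halfplanes P5"
  by (rule nonedge[where B="(-1,2)" and D="(2,0)"]) (auto simp: P5_def)
lemma d41: "{(-1,2), (2,0)} \<notin> delaunay_edges halfplanes P5"
  by (rule nonedge[where B="(0,0)" and D="(3,2)"]) (auto simp: P5_def)

lemma t012: "P5 \<inter> {p. (-1) * fst p + 2 * snd p \<le> 3} = {(0,0), (2,0), (3,2)}" by (auto simp: P5_def)
lemma t123: "P5 \<inter> {p. (-2) * fst p + (-1) * snd p \<le> -2} = {(2,0), (3,2), (1,3)}" by (auto simp: P5_def)
lemma t234: "P5 \<inter> {p. 0 * fst p + (-1) * snd p \<le> -1} = {(3,2), (1,3), (-1,2)}" by (auto simp: P5_def)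
lemma t340: "P5 \<inter> {p. 2 * fst p + (-1) * snd p \<le> 2} = {(1,3), (-1,2), (0,0)}" by (auto simp: P5_def)
lemma t401: "P5 \<inter> {p. 1 * fst p + 2 * snd p \<le> 5} = {(-1,2), (0,0), (2,0)}" by (auto simp: P5_def)

lemma part2:
  "\<exists>S :: point set. finite S \<and>
           (\<forall>col :: point set \<Rightarrow> bool.
              \<exists>H. halfplane H \<and>
                 card {e \<in> delaunay_edges halfplanes S. e \<subseteq> H} \<ge> 2 \<and>
                 (\<forall>e1 \<in> delaunay_edges halfplanes S. \<forall>e2 \<in> delaunay_edges halfplanes S.
                    e1 \<subseteq> H \<longrightarrow> e2 \<subseteq> H \<longrightarrow> col e1 = col e2))"
proof -
  have fin: "finite P5" by (simp add: P5_def)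
  have "\<exists>H. halfplane H \<and>
                 card {e \<in> delaunay_edges halfplanes P5. e \<subseteq> H} \<ge> 2 \<and>
                 (\<forall>e1 \<in> delaunay_edges halfplanes P5. \<forall>e2 \<in> delaunay_edges halfplanes P5.
                    e1 \<subseteq> H \<longrightarrow> e2 \<subseteq> H \<longrightarrow> col e1 = col e2)" for col :: "point set \<Rightarrow> bool"
  proof -
  have "col {(0,0), (2,0)} = col {(2,0), (3,2)} \<or> col {(2,0), (3,2)} = col {(3,2), (1,3)} \<or>
        col {(3,2), (1,3)} = col {(1,3), (-1,2)} \<or> col {(1,3), (-1,2)} = col {(-1,2), (0,0)} \<or>
        col {(-1,2), (0,0)} = col {(0,0), (2,0)}" by blast
  thus ?thesis
  proof (elim disjE)
    assume c: "col {(0,0), (2,0)} = col {(2,0), (3,2)}"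
    show ?thesis by (rule part2_case[OF hp t012 _ _ _ e01 e12 d02 c]) auto
  next
    assume c: "col {(2,0), (3,2)} = col {(3,2), (1,3)}"
    show ?thesis by (rule part2_case[OF hp t123 _ _ _ e12 e23 d13 c]) auto
  next
    assume c: "col {(3,2), (1,3)} = col {(1,3), (-1,2)}"
    show ?thesis by (rule part2_case[OF hp t234 _ _ _ e23 e34 d24 c]) auto
  next
    assume c: "col {(1,3), (-1,2)} = col {(-1,2), (0,0)}"
    show ?thesis by (rule part2_case[OF hp t340 _ _ _ e34 e40 d30 c]) auto
  next
    assume c: "col {(-1,2), (0,0)} = col {(0,0), (2,0)}"
    show ?thesis by (rule part2_case[OF hp t401 _ _ _ e40 e01 d41 c]) auto
  qed
  qed
  thus ?thesis using fin by blast
qed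


theorem theorem2:
  shows "(\<forall>S :: point set. finite S \<longrightarrow>
           (\<exists>col :: point set \<Rightarrow> bool.
              \<forall>H. halfplane H \<longrightarrow>
                 card {e \<in> delaunay_edges halfplanes S. e \<subseteq> H} \<ge> 3 \<longrightarrow>
                 (\<exists>e1 \<in> delaunay_edges halfplanes S. \<exists>e2 \<in> delaunay_edges halfplanes S.
                    e1 \<subseteq> H \<and> e2 \<subseteq> H \<and> col e1 \<noteq> col e2)))
       \<and> (\<exists>S :: point set. finite S \<and>
           (\<forall>col :: point set \<Rightarrow> bool.
              \<exists>H. halfplane H \<and>
                 card {e \<in> delaunay_edges halfplanes S. e \<subseteq> H} \<ge> 2 \<and>
                 (\<forall>e1 \<in> delaunay_edges halfplanes S. \<forall>e2 \<in> delaunay_edges halfplanes S.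
                    e1 \<subseteq> H \<longrightarrow> e2 \<subseteq> H \<longrightarrow> col e1 = col e2)))"
  using part1 part2 by (rule conjI)

end
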